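(* Let $K\geq 4$ and let $H$ be a signed bipartite graph. If a signed bipartite graph $G$ whose $+$ class has size $m$ and $-$ class has size $n$ has at least $K\cdot z(m, n,H)$ edges, then $G$ contains at least $\left(\frac{K}{2}\right)^{\mathrm{e}(H)} \cdot z(m,n,H)$ signed copies of $H$.
   Context: A signed bipartite graph is a bipartite graph with a proper vertex 2-colouring by $+$ and $-$. A signed copy of $H$ in $G$ is a copy of $H$ in $G$ with $+$ vertices mapped into the $+$ class and $-$ vertices into the $-$ class. $z(m,n,H)$ is the maximum number of edges in a signed bipartite graph with $+$ class of size $m$ and $-$ class of size $n$ containing no signed copy of $H$. *)

theory Defs
  imports Complex_Main
begin

text \<open>A signed bipartite graph is given by its + class P, its - class Q and its
  edge set F, a subset of P \<times> Q (edges always join the + class to the - class).\<close>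

definition signed_bigraph :: "'a set \<Rightarrow> 'b set \<Rightarrow> ('a \<times> 'b) set \<Rightarrow> bool" where
  "signed_bigraph P Q F \<longleftrightarrow> finite P \<and> finite Q \<and> F \<subseteq> P \<times> Q"

definition signed_embedding ::
  "'a set \<Rightarrow> 'b set \<Rightarrow> ('a \<times> 'b) set \<Rightarrow> 'c set \<Rightarrow> 'd set \<Rightarrow> ('c \<times> 'd) set
   \<Rightarrow> ('a \<Rightarrow> 'c) \<Rightarrow> ('b \<Rightarrow> 'd) \<Rightarrow> bool" where
  "signed_embedding P Q F A B E f g \<longleftrightarrow>
     inj_on f P \<and> inj_on g Q \<and> f ` P \<subseteq> A \<and> g ` Q \<subseteq> B \<and>
     (\<forall>(p, q) \<in> F. (f p, g q) \<in> E)"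

definition signed_copies ::
  "'a set \<Rightarrow> 'b set \<Rightarrow> ('a \<times> 'b) set \<Rightarrow> 'c set \<Rightarrow> 'd set \<Rightarrow> ('c \<times> 'd) set
   \<Rightarrow> ('c set \<times> 'd set \<times> ('c \<times> 'd) set) set" where
  "signed_copies P Q F A B E =
     {(f ` P, g ` Q, (\<lambda>(p, q). (f p, g q)) ` F) | f g. signed_embedding P Q F A B E f g}"

definition contains_signed_copy ::
  "'a set \<Rightarrow> 'b set \<Rightarrow> ('a \<times> 'b) set \<Rightarrow> 'c set \<Rightarrow> 'd set \<Rightarrow> ('c \<times> 'd) set \<Rightarrow> bool" where
  "contains_signed_copy P Q F A B E \<longleftrightarrow> (\<exists>f g. signed_embedding P Q F A B E f g)"

text \<open>z(m,n,H): maximum number of edges of a signed bipartite graph with + class of size m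
  and - class of size n (w.l.o.g. the vertex sets {..<m} and {..<n}) with no signed copy
  of H.  (Sup of an empty set of naturals is 0; this only happens when H is edgeless.)\<close>

definition zarank :: "nat \<Rightarrow> nat \<Rightarrow> 'a set \<Rightarrow> 'b set \<Rightarrow> ('a \<times> 'b) set \<Rightarrow> nat" where
  "zarank m n P Q F = Sup {card E | E. E \<subseteq> {..<m} \<times> {..<n} \<and>
                               \<not> contains_signed_copy P Q F {..<m} {..<n} E}"

end

theory Submission
  imports Defs
begin

lemma binom_ratio:
  "e \<le> s \<Longrightarrow> s \<le> M \<Longrightarrow>
   real M ^ e * real ((M - e) choose (s - e)) \<le> real (M choose s) * real s ^ e"
proof (induction e arbitrary: M s)
  case 0
  then show ?case by simp
next
  case (Suc e)
  obtain s' where s': "s = Suc s'" using Suc.prems by (cases s) auto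
  obtain M' where M': "M = Suc M'" using Suc.prems s' by (cases M) auto
  have es: "e \<le> s'" "s' \<le> M'" using Suc.prems s' M' by auto
  have IH: "real M' ^ e * real ((M' - e) choose (s' - e)) \<le> real (M' choose s') * real s' ^ e"
    using Suc.IH[OF es] .
  have rec: "real M * real (M' choose s') = real (M choose s) * real s"
    using Suc_times_binomial_eq[of M' s'] unfolding M' s' by (metis of_nat_mult)
  have key: "real M ^ e * real ((M' - e) choose (s' - e)) \<le> real (M' choose s') * real s ^ e"
  proof (cases "s' = 0")
    case True
    then have "e = 0" using es by simp
    then show ?thesis using True by simp
  next
    case False
    have pm: "(real M * real s') ^ e \<le> (real M' * real s) ^ e"
    proof (rule power_mono)
      show "real M * real s' \<le> real M' * real s"
        using es unfolding M' s' by (simp add: algebra_simps)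
    qed simp
    have "real s' ^ e * (real M ^ e * real ((M' - e) choose (s' - e)))
        = (real M * real s') ^ e * real ((M' - e) choose (s' - e))"
      by (simp add: power_mult_distrib)
    also have "\<dots> \<le> (real M' * real s) ^ e * real ((M' - e) choose (s' - e))"
      by (rule mult_right_mono[OF pm]) simp
    also have "\<dots> = real s ^ e * (real M' ^ e * real ((M' - e) choose (s' - e)))"
      by (simp add: power_mult_distrib)
    also have "\<dots> \<le> real s ^ e * (real (M' choose s') * real s' ^ e)"
      by (rule mult_left_mono[OF IH]) simp
    also have "\<dots> = real s' ^ e * (real (M' choose s') * real s ^ e)" by simp
    finally show ?thesis using False by (simp add: mult_le_cancel_left)
  qed
  have "real M ^ Suc e * real ((M - Suc e) choose (s - Suc e))
      = real M * (real M ^ e * real ((M' - e) choose (s' - e)))"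
    unfolding M' s' by simp
  also have "\<dots> \<le> real M * (real (M' choose s') * real s ^ e)"
    by (rule mult_left_mono[OF key]) simp
  also have "\<dots> = real (M choose s) * real s ^ Suc e"
    using rec by (simp add: algebra_simps)
  finally show ?case .
qed

lemma supersets_card:
  assumes "finite E" "T \<subseteq> E" "card T \<le> s"
  shows "card {S. S \<subseteq> E \<and> card S = s \<and> T \<subseteq> S} = (card E - card T) choose (s - card T)"
proof -
  have fT: "finite T" using assms finite_subset by blast
  have "bij_betw (\<lambda>S. S - T) {S. S \<subseteq> E \<and> card S = s \<and> T \<subseteq> S}
           {U. U \<subseteq> E - T \<and> card U = s - card T}"
  proof (rule bij_betw_byWitness[where f' = "\<lambda>U. U \<union> T"])
    show "\<forall>S\<in>{S. S \<subseteq> E \<and> card S = s \<and> T \<subseteq> S}. S - T \<union> T = S" by auto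
    show "\<forall>U\<in>{U. U \<subseteq> E - T \<and> card U = s - card T}. U \<union> T - T = U" by auto
    show "(\<lambda>S. S - T) ` {S. S \<subseteq> E \<and> card S = s \<and> T \<subseteq> S} \<subseteq> {U. U \<subseteq> E - T \<and> card U = s - card T}"
    proof (rule image_subsetI)
      fix S assume "S \<in> {S. S \<subseteq> E \<and> card S = s \<and> T \<subseteq> S}"
      then have "S \<subseteq> E" "T \<subseteq> S" "card S = s" by auto
      then show "S - T \<in> {U. U \<subseteq> E - T \<and> card U = s - card T}"
        using fT by (auto simp: card_Diff_subset)
    qed
    show "(\<lambda>U. U \<union> T) ` {U. U \<subseteq> E - T \<and> card U = s - card T} \<subseteq> {S. S \<subseteq> E \<and> card S = s \<and> T \<subseteq> S}"
    proof (rule image_subsetI)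
      fix U assume "U \<in> {U. U \<subseteq> E - T \<and> card U = s - card T}"
      then have U: "U \<subseteq> E - T" "card U = s - card T" by auto
      have "finite U" using U assms finite_subset by blast
      moreover have "U \<inter> T = {}" using U by auto
      ultimately have "card (U \<union> T) = card U + card T" using fT card_Un_disjoint by blast
      then show "U \<union> T \<in> {S. S \<subseteq> E \<and> card S = s \<and> T \<subseteq> S}" using U assms by auto
    qed
  qed
  then have "card {S. S \<subseteq> E \<and> card S = s \<and> T \<subseteq> S} = card {U. U \<subseteq> E - T \<and> card U = s - card T}"
    by (rule bij_betw_same_card)
  also have "\<dots> = card (E - T) choose (s - card T)"
    using assms by (intro n_subsets) auto
  also have "card (E - T) = card E - card T" using assms fT card_Diff_subset by blast
  finally show ?thesis .
qed


lemma embed_transfer: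
  assumes a: "bij_betw \<alpha> A A'" and b: "bij_betw \<beta> B B'" and S: "S \<subseteq> A \<times> B"
    and emb: "signed_embedding P Q F A' B' ((\<lambda>(a, b). (\<alpha> a, \<beta> b)) ` S) f g"
  shows "signed_embedding P Q F A B S (the_inv_into A \<alpha> \<circ> f) (the_inv_into B \<beta> \<circ> g)"
proof -
  have ia: "bij_betw (the_inv_into A \<alpha>) A' A" using a by (rule bij_betw_the_inv_into)
  have ib: "bij_betw (the_inv_into B \<beta>) B' B" using b by (rule bij_betw_the_inv_into)
  have e: "inj_on f P" "inj_on g Q" "f ` P \<subseteq> A'" "g ` Q \<subseteq> B'"
     "\<forall>(p, q) \<in> F. (f p, g q) \<in> (\<lambda>(a, b). (\<alpha> a, \<beta> b)) ` S"
    using emb unfolding signed_embedding_def by auto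
  have "inj_on (the_inv_into A \<alpha> \<circ> f) P"
    proof (rule comp_inj_on[OF e(1)])
    show "inj_on (the_inv_into A \<alpha>) (f ` P)"
      using inj_on_subset[OF _ e(3)] ia unfolding bij_betw_def by blast
  qed
  moreover have "inj_on (the_inv_into B \<beta> \<circ> g) Q"
    proof (rule comp_inj_on[OF e(2)])
    show "inj_on (the_inv_into B \<beta>) (g ` Q)"
      using inj_on_subset[OF _ e(4)] ib unfolding bij_betw_def by blast
  qed
  moreover have "(the_inv_into A \<alpha> \<circ> f) ` P \<subseteq> A"
    proof -
    have "(the_inv_into A \<alpha> \<circ> f) ` P = the_inv_into A \<alpha> ` (f ` P)" by (rule image_comp[symmetric])
    also have "\<dots> \<subseteq> the_inv_into A \<alpha> ` A'" using e(3) by (rule image_mono)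
    also have "\<dots> = A" using ia by (simp add: bij_betw_def)
    finally show ?thesis .
  qed
  moreover have "(the_inv_into B \<beta> \<circ> g) ` Q \<subseteq> B"
    proof -
    have "(the_inv_into B \<beta> \<circ> g) ` Q = the_inv_into B \<beta> ` (g ` Q)" by (rule image_comp[symmetric])
    also have "\<dots> \<subseteq> the_inv_into B \<beta> ` B'" using e(4) by (rule image_mono)
    also have "\<dots> = B" using ib by (simp add: bij_betw_def)
    finally show ?thesis .
  qed
  moreover have "\<forall>(p, q) \<in> F. ((the_inv_into A \<alpha> \<circ> f) p, (the_inv_into B \<beta> \<circ> g) q) \<in> S"
  proof clarify
    fix p q assume "(p, q) \<in> F"
    then have "(f p, g q) \<in> (\<lambda>(a, b). (\<alpha> a, \<beta> b)) ` S" using e(5) by blast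
    then obtain x y where xy: "(x, y) \<in> S" "f p = \<alpha> x" "g q = \<beta> y" by auto
    have "x \<in> A" "y \<in> B" using xy S by auto
    then have "the_inv_into A \<alpha> (\<alpha> x) = x" "the_inv_into B \<beta> (\<beta> y) = y"
      using a b by (auto simp: bij_betw_def the_inv_into_f_f)
    then show "((the_inv_into A \<alpha> \<circ> f) p, (the_inv_into B \<beta> \<circ> g) q) \<in> S" using xy by simp
  qed
  ultimately show ?thesis unfolding signed_embedding_def by blast
qed


lemma emb_copy:
  assumes "signed_embedding P Q F A B S f g" "S \<subseteq> E"
  shows "(f ` P, g ` Q, (\<lambda>(p, q). (f p, g q)) ` F) \<in> signed_copies P Q F A B E"
proof -
  have h: "inj_on f P \<and> inj_on g Q \<and> f ` P \<subseteq> A \<and> g ` Q \<subseteq> B" "\<forall>(p, q) \<in> F. (f p, g q) \<in> S"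
    using assms(1) unfolding signed_embedding_def by simp_all
  have "\<forall>(p, q) \<in> F. (f p, g q) \<in> E"
  proof clarify
    fix p q assume "(p, q) \<in> F"
    then have "(f p, g q) \<in> S" using h(2) by auto
    then show "(f p, g q) \<in> E" using assms(2) by (rule subsetD[rotated])
  qed
  then have emb: "signed_embedding P Q F A B E f g" using h(1) unfolding signed_embedding_def by simp
  have "\<exists>f' g'. (f ` P, g ` Q, (\<lambda>(p, q). (f p, g q)) ` F) = (f' ` P, g' ` Q, (\<lambda>(p, q). (f' p, g' q)) ` F)
     \<and> signed_embedding P Q F A B E f' g'"
    using emb by (intro exI[of _ f] exI[of _ g]) simp
  then show ?thesis unfolding signed_copies_def by (simp only: mem_Collect_eq)
qed

lemma copy_props:
  assumes "c \<in> signed_copies P Q F A B E" "F \<subseteq> P \<times> Q"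
  shows "snd (snd c) \<subseteq> E" "card (snd (snd c)) = card F"
    "\<exists>f g. signed_embedding P Q F A B E f g \<and> snd (snd c) = (\<lambda>(p, q). (f p, g q)) ` F"
proof -
  obtain f g where fg: "signed_embedding P Q F A B E f g"
    "c = (f ` P, g ` Q, (\<lambda>(p, q). (f p, g q)) ` F)"
    using assms(1) unfolding signed_copies_def by blast
  then show "snd (snd c) \<subseteq> E" unfolding signed_embedding_def by auto
  have "inj_on (\<lambda>(p, q). (f p, g q)) F"
    using fg(1) assms(2) unfolding signed_embedding_def inj_on_def by (auto simp: subset_iff)
  then show "card (snd (snd c)) = card F" using fg(2) by (simp add: card_image)
  show "\<exists>f g. signed_embedding P Q F A B E f g \<and> snd (snd c) = (\<lambda>(p, q). (f p, g q)) ` F"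
    using fg by auto
qed


lemma zbound:
  assumes "S \<subseteq> {..<m} \<times> {..<n}" "\<not> contains_signed_copy P Q F {..<m} {..<n} S"
  shows "card S \<le> zarank m n P Q F"
proof -
  define X where "X = {card E | E. E \<subseteq> {..<m} \<times> {..<n} \<and> \<not> contains_signed_copy P Q F {..<m} {..<n} E}"
  have "bdd_above X"
  proof (rule bdd_aboveI)
    fix x assume "x \<in> X"
    then obtain E where "x = card E" "E \<subseteq> {..<m} \<times> {..<n}" unfolding X_def by blast
    then show "x \<le> card ({..<m} \<times> {..<n})" by (metis card_mono finite_SigmaI finite_lessThan)
  qed
  moreover have "card S \<in> X" using assms unfolding X_def by blast
  ultimately have "card S \<le> Sup X" by (rule cSup_upper[rotated])
  then show ?thesis unfolding zarank_def X_def .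
qed


lemma card_filter_sum: "finite A \<Longrightarrow> card {x\<in>A. P x} = (\<Sum>x\<in>A. if P x then 1 else 0)"
  by (simp add: sum.inter_filter[symmetric])

theorem lemma4p1:
  fixes K :: real
    and P :: "'a set" and Q :: "'b set" and F :: "('a \<times> 'b) set"
    and A :: "'c set" and B :: "'d set" and E :: "('c \<times> 'd) set"
    and m n :: nat
  assumes "K \<ge> 4"
    and "signed_bigraph P Q F"
    and "signed_bigraph A B E"
    and "card A = m" and "card B = n"
    and "real (card E) \<ge> K * real (zarank m n P Q F)"
  shows "real (card (signed_copies P Q F A B E))
           \<ge> (K / 2) ^ card F * real (zarank m n P Q F)"
proof -
  define z where "z = zarank m n P Q F"
  define C where "C = signed_copies P Q F A B E"
  define N where "N = card C"
  define M where "M = card E"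
  define e where "e = card F"
  have K4: "K \<ge> 4" using assms(1) .
  have MK: "real M \<ge> K * real z" using assms(6) unfolding M_def z_def .
  have finP: "finite P" "finite Q" "F \<subseteq> P \<times> Q" using assms(2) unfolding signed_bigraph_def by auto
  have finA: "finite A" "finite B" "E \<subseteq> A \<times> B" using assms(3) unfolding signed_bigraph_def by auto
  have finE: "finite E" using finA finite_subset by blast
  obtain \<alpha> where \<alpha>: "bij_betw \<alpha> A {..<m}"
    using ex_bij_betw_finite_nat[OF finA(1)] assms(4) by (auto simp: atLeast0LessThan)
  obtain \<beta> where \<beta>: "bij_betw \<beta> B {..<n}"
    using ex_bij_betw_finite_nat[OF finA(2)] assms(5) by (auto simp: atLeast0LessThan)
  have zb: "card S \<le> z" if S: "S \<subseteq> E" "\<not> contains_signed_copy P Q F A B S" for S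
  proof -
    let ?h = "\<lambda>(a, b). (\<alpha> a, \<beta> b)"
    have SAB: "S \<subseteq> A \<times> B" using S finA by blast
    have inj: "inj_on ?h (A \<times> B)"
      using \<alpha> \<beta> unfolding bij_betw_def inj_on_def by auto
    have c1: "card (?h ` S) = card S"
      using inj_on_subset[OF inj SAB] by (rule card_image)
    have sub: "?h ` S \<subseteq> {..<m} \<times> {..<n}"
      using SAB \<alpha> \<beta> unfolding bij_betw_def by auto
    have "\<not> contains_signed_copy P Q F {..<m} {..<n} (?h ` S)"
    proof
      assume "contains_signed_copy P Q F {..<m} {..<n} (?h ` S)"
      then obtain f g where "signed_embedding P Q F {..<m} {..<n} (?h ` S) f g"
        unfolding contains_signed_copy_def by blast
      from embed_transfer[OF \<alpha> \<beta> SAB this] S(2) show False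
        unfolding contains_signed_copy_def by blast
    qed
    from zbound[OF sub this] c1 show ?thesis unfolding z_def by simp
  qed
  show ?thesis
  proof (cases "z = 0")
    case True
    then show ?thesis unfolding z_def by simp
  next
    case zpos: False
    have Fne: "F \<noteq> {}"
    proof
      assume F0: "F = {}"
      show False
      proof (cases "contains_signed_copy P Q F A B E")
        case True
        then obtain f g where fg: "signed_embedding P Q F A B E f g"
          unfolding contains_signed_copy_def by blast
        have "contains_signed_copy P Q F {..<m} {..<n} S" for S
        proof -
          have "signed_embedding P Q F {..<m} {..<n} S (\<alpha> \<circ> f) (\<beta> \<circ> g)"
            using fg \<alpha> \<beta> F0 unfolding signed_embedding_def bij_betw_def
            by (auto intro: comp_inj_on inj_on_subset simp: image_comp[symmetric]) (metis imageI image_subset_iff lessThan_iff)+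
          then show ?thesis unfolding contains_signed_copy_def by blast
        qed
        then have "zarank m n P Q F = 0" unfolding zarank_def by simp
        then show False using zpos unfolding z_def by simp
      next
        case False
        have "card E \<le> z" by (rule zb) (use False in simp_all)
        then have "real M \<le> real z" unfolding M_def by simp
        moreover have "4 * real z \<le> K * real z" using K4 by (intro mult_right_mono) simp_all
        ultimately show False using MK zpos by simp
      qed
    qed
    define s where "s = 2 * z"
    have sM: "s \<le> M"
    proof -
      have "2 * real z \<le> K * real z" using K4 by (intro mult_right_mono) simp_all
      then have "real s \<le> K * real z" unfolding s_def by simp
      then show ?thesis using MK by linarith
    qed
    have finC: "finite C"
    proof (rule finite_subset)
      show "C \<subseteq> Pow A \<times> Pow B \<times> Pow E"
      proof
        fix c assume c: "c \<in> C"
        then obtain f g where fg: "signed_embedding P Q F A B E f g"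
          "c = (f ` P, g ` Q, (\<lambda>(p, q). (f p, g q)) ` F)"
          unfolding C_def signed_copies_def by blast
        then show "c \<in> Pow A \<times> Pow B \<times> Pow E" unfolding signed_embedding_def by auto
      qed
      show "finite (Pow A \<times> Pow B \<times> Pow E)" using finA finE by simp
    qed
    define cop where "cop S = {c \<in> C. snd (snd c) \<subseteq> S}" for S
    have hit: "card S \<le> z + card (cop S)" if S: "S \<subseteq> E" for S
    proof -
      define R where "R = (\<lambda>c. SOME x. x \<in> snd (snd c)) ` cop S"
      have finS: "finite S" using S finE finite_subset by blast
      have fincop: "finite (cop S)" using finC unfolding cop_def by simp
      have cR: "card R \<le> card (cop S)" unfolding R_def using fincop by (rule card_image_le)
      have nc: "\<not> contains_signed_copy P Q F A B (S - R)"
      proof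
        assume "contains_signed_copy P Q F A B (S - R)"
        then obtain f g where fg: "signed_embedding P Q F A B (S - R) f g"
          unfolding contains_signed_copy_def by blast
        define c where "c = (f ` P, g ` Q, (\<lambda>(p, q). (f p, g q)) ` F)"
        have cC: "c \<in> C" unfolding C_def c_def by (rule emb_copy[OF fg]) (use S in blast)
        have edg: "snd (snd c) \<subseteq> S - R" using fg unfolding c_def signed_embedding_def by auto
        then have "c \<in> cop S" using cC unfolding cop_def by auto
        then have inR: "(SOME x. x \<in> snd (snd c)) \<in> R" unfolding R_def by blast
        have "snd (snd c) \<noteq> {}" using Fne unfolding c_def by simp
        then have "(SOME x. x \<in> snd (snd c)) \<in> snd (snd c)" by (simp add: some_in_eq)
        then show False using inR edg by blast
      qed
      have "card S - card R \<le> card (S - R)" 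
        using fincop unfolding R_def by (intro diff_card_le_card_Diff finite_imageI)
      moreover have "card (S - R) \<le> z" by (rule zb[OF _ nc]) (use S in blast)
      ultimately show ?thesis using cR by linarith
    qed
    obtain S0 where S0: "S0 \<subseteq> E" "card S0 = s" using obtain_subset_with_card_n[of s E] sM
      unfolding M_def by metis
    have es: "e \<le> s"
    proof (rule ccontr)
      assume "\<not> e \<le> s"
      have "cop S0 = {}"
      proof (rule ccontr)
        assume "cop S0 \<noteq> {}"
        then obtain c where c: "c \<in> C" "snd (snd c) \<subseteq> S0" unfolding cop_def by blast
        have "card (snd (snd c)) = e" using copy_props(2)[OF c(1)[unfolded C_def] finP(3)] e_def by simp
        moreover have "card (snd (snd c)) \<le> card S0"
          using c(2) S0 finE finite_subset card_mono by metis
        ultimately show False using S0 \<open>\<not> e \<le> s\<close> by simp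
      qed
      then have "s \<le> z" using hit[OF S0(1)] S0 by simp
      then show False using zpos unfolding s_def by simp
    qed
    define Ss where "Ss = {S. S \<subseteq> E \<and> card S = s}"
    have finSs: "finite Ss" unfolding Ss_def using finE by simp
    have cSs: "card Ss = M choose s" unfolding Ss_def M_def using finE by (rule n_subsets)
    have dc: "(\<Sum>S\<in>Ss. card (cop S)) = N * ((M - e) choose (s - e))"
    proof -
      have "(\<Sum>S\<in>Ss. card (cop S)) = (\<Sum>S\<in>Ss. \<Sum>c\<in>C. if snd (snd c) \<subseteq> S then 1 else 0)"
        unfolding cop_def using finC by (simp add: card_filter_sum)
      also have "\<dots> = (\<Sum>c\<in>C. \<Sum>S\<in>Ss. if snd (snd c) \<subseteq> S then 1 else 0)" by (rule sum.swap)
      also have "\<dots> = (\<Sum>c\<in>C. card {S. S \<subseteq> E \<and> card S = s \<and> snd (snd c) \<subseteq> S})"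
      proof (rule sum.cong)
        fix c assume "c \<in> C"
        have "{S. S \<subseteq> E \<and> card S = s \<and> snd (snd c) \<subseteq> S} = {S\<in>Ss. snd (snd c) \<subseteq> S}"
          unfolding Ss_def by blast
        then show "(\<Sum>S\<in>Ss. if snd (snd c) \<subseteq> S then 1 else 0) = card {S. S \<subseteq> E \<and> card S = s \<and> snd (snd c) \<subseteq> S}"
          using finSs by (simp add: card_filter_sum)
      qed simp
      also have "\<dots> = (\<Sum>c\<in>C. (M - e) choose (s - e))"
      proof (rule sum.cong)
        fix c assume "c \<in> C"
        then have "snd (snd c) \<subseteq> E" "card (snd (snd c)) = e"
          using copy_props[of c P Q F A B E] finP(3) unfolding C_def e_def by auto
        then show "card {S. S \<subseteq> E \<and> card S = s \<and> snd (snd c) \<subseteq> S} = (M - e) choose (s - e)"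
          using supersets_card[OF finE, of "snd (snd c)" s] es unfolding M_def by simp
      qed simp
      also have "\<dots> = N * ((M - e) choose (s - e))" unfolding N_def by simp
      finally show ?thesis .
    qed
    have "(\<Sum>S\<in>Ss. card S) \<le> (\<Sum>S\<in>Ss. z + card (cop S))"
      by (rule sum_mono) (rule hit, simp add: Ss_def)
    then have ineq: "(M choose s) * s \<le> (M choose s) * z + N * ((M - e) choose (s - e))"
      using cSs dc unfolding Ss_def by (simp add: sum.distrib)
    then have ineq2: "(M choose s) * z \<le> N * ((M - e) choose (s - e))"
      unfolding s_def by (simp add: algebra_simps)
    define Cp where "Cp = (M - e) choose (s - e)"
    have Cpos: "Cp > 0" unfolding Cp_def using sM es by simp
    have br: "real M ^ e * real Cp \<le> real (M choose s) * real s ^ e"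
      unfolding Cp_def by (rule binom_ratio[OF es sM])
    have "real z * (real M ^ e * real Cp) \<le> real z * (real (M choose s) * real s ^ e)"
      by (rule mult_left_mono[OF br]) simp
    also have "\<dots> = real ((M choose s) * z) * real s ^ e" by simp
    also have "\<dots> \<le> real (N * Cp) * real s ^ e"
    proof (rule mult_right_mono)
      show "real ((M choose s) * z) \<le> real (N * Cp)" using ineq2 unfolding Cp_def by (simp only: of_nat_le_iff)
    qed simp
    finally have "(real z * real M ^ e) * real Cp \<le> (real N * real s ^ e) * real Cp"
      by (simp add: algebra_simps)
    then have key: "real z * real M ^ e \<le> real N * real s ^ e" using Cpos by simp
    have spos: "real s > 0" using zpos unfolding s_def by simp
    have "K / 2 \<le> real M / real s" using MK spos zpos unfolding s_def by (simp add: field_simps)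
    then have "(K / 2) ^ e \<le> (real M / real s) ^ e" by (rule power_mono) (use K4 in simp)
    then have "(K / 2) ^ e * real z \<le> (real M / real s) ^ e * real z" by (rule mult_right_mono) simp
    also have "\<dots> = real z * real M ^ e / real s ^ e" by (simp add: power_divide)
    also have "\<dots> \<le> real N" using key spos by (simp add: divide_le_eq)
    finally show ?thesis unfolding N_def C_def e_def z_def .
  qed
qed
end
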